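(* Let $n\in\mathbb{N}$, let $m\leqslant n$, let $\alpha_k>0$ and $\beta_k>0$ for $k=1,\ldots,m$, and let $0\leqslant\varphi_1<\ldots<\varphi_m<2\pi$. Put \[ h(z)\coloneq\sum_{k=1}^m\alpha_k\frac{1+e^{i\varphi_k}z}{1-e^{i\varphi_k}z},\qquad f\coloneq e^{-h},\qquad g(z)\coloneq\sum_{k=1}^m\beta_k\frac{1+e^{i\varphi_k}z}{1-e^{i\varphi_k}z}, \] and let $H(z)\coloneq\{f\}_n+2\{f\}_{n-1}z+2\{f\}_{n-2}z^2+\ldots+2\{f\}_0z^n$. Assume that $\operatorname{Re}H(z)>0$ for all $z\in\Delta$. Then \[ \operatorname{Re}\bigl(\{f\}_n\{g\}_0+\{f\}_{n-1}\{g\}_1+\ldots+\{f\}_0\{g\}_n\bigr)=0 \] holds if and only if $\operatorname{Re}H(e^{i\varphi_k})=0$ for all $k=1,\ldots,m$.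
   Context: $\Delta=\{z\in\mathbb{C}:|z|<1\}$ is the open unit disk. For a function $f$ holomorphic in $\Delta$, $\{f\}_j$ denotes its $j$-th Taylor coefficient at $0$, i.e. $f(z)=\sum_{j\geqslant0}\{f\}_jz^j$. *)

theory Defs
  imports "HOL-Complex_Analysis.Complex_Analysis"
begin

definition taylor_coeff :: "(complex \<Rightarrow> complex) \<Rightarrow> nat \<Rightarrow> complex" where
  "taylor_coeff f j = (deriv ^^ j) f 0 / of_nat (fact j)"

end

theory Submission
  imports Defs
begin

definition Pser :: "complex \<Rightarrow> complex fps" where
  "Pser c = Abs_fps (\<lambda>j. if j = 0 then 1 else 2 * c ^ j)"

lemma Pser_mult: "Pser c * (1 - fps_const c * fps_X) = 1 + fps_const c * fps_X"
proof (rule fps_ext)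
  fix j
  show "(Pser c * (1 - fps_const c * fps_X)) $ j = (1 + fps_const c * fps_X) $ j"
  proof (cases j)
    case 0 then show ?thesis by (simp add: Pser_def)
  next
    case (Suc i)
    have "(Pser c * (1 - fps_const c * fps_X)) $ j = Pser c $ j - c * Pser c $ i"
      by (simp add: Suc right_diff_distrib mult.assoc[symmetric] del: fps_X_mult_right_nth)
      (simp add: fps_X_mult_right_nth)
    then show ?thesis by (cases i) (auto simp: Suc Pser_def)
  qed
qed

lemma Pser_eq: "(1 + fps_const c * fps_X) / (1 - fps_const c * fps_X) = Pser c"
proof -
  have nz: "(1 - fps_const c * fps_X) $ 0 \<noteq> 0" by simp
  have "(1 + fps_const c * fps_X) / (1 - fps_const c * fps_X)
        = Pser c * (1 - fps_const c * fps_X) * inverse (1 - fps_const c * fps_X)"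
    by (simp add: Pser_mult fps_divide_unit nz)
  also have "\<dots> = Pser c" using nz by (simp add: mult.assoc inverse_mult_eq_1')
  finally show ?thesis .
qed

lemma frac_exp: "(\<lambda>z. (1 + c * z) / (1 - c * z)) has_fps_expansion Pser c"
proof -
  have "(\<lambda>z. (1 + c * z) / (1 - c * z)) has_fps_expansion
          (1 + fps_const c * fps_X) / (1 - fps_const c * fps_X)"
    by (intro fps_expansion_intros) auto
  then show ?thesis by (simp add: Pser_eq)
qed

theorem theorem3:
  fixes n m :: nat and \<alpha> \<beta> \<phi> :: "nat \<Rightarrow> real"
    and h f g H :: "complex \<Rightarrow> complex"
  assumes "m \<le> n"
    and "\<forall>k\<in>{1..m}. \<alpha> k > 0 \<and> \<beta> k > 0"
    and "\<forall>k\<in>{1..m}. 0 \<le> \<phi> k \<and> \<phi> k < 2 * pi"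
    and "\<forall>k. 1 \<le> k \<and> k < m \<longrightarrow> \<phi> k < \<phi> (Suc k)"
    and h_def: "h = (\<lambda>z. \<Sum>k=1..m. complex_of_real (\<alpha> k) *
                   ((1 + exp (\<i> * \<phi> k) * z) / (1 - exp (\<i> * \<phi> k) * z)))"
    and f_def: "f = (\<lambda>z. exp (- h z))"
    and g_def: "g = (\<lambda>z. \<Sum>k=1..m. complex_of_real (\<beta> k) *
                   ((1 + exp (\<i> * \<phi> k) * z) / (1 - exp (\<i> * \<phi> k) * z)))"
    and H_def: "H = (\<lambda>z. taylor_coeff f n + (\<Sum>j=1..n. 2 * taylor_coeff f (n - j) * z ^ j))"
    and "\<forall>z. norm z < 1 \<longrightarrow> Re (H z) > 0"
  shows "Re (\<Sum>j=0..n. taylor_coeff f (n - j) * taylor_coeff g j) = 0 \<longleftrightarrow>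
         (\<forall>k\<in>{1..m}. Re (H (exp (\<i> * \<phi> k))) = 0)"
proof -
  define \<zeta> where "\<zeta> k = exp (\<i> * complex_of_real (\<phi> k))" for k
  define a where "a j = taylor_coeff f j" for j
  have gexp: "g has_fps_expansion (\<Sum>k=1..m. fps_const (complex_of_real (\<beta> k)) * Pser (\<zeta> k))"
    unfolding g_def \<zeta>_def by (intro fps_expansion_intros frac_exp)
  have tg: "taylor_coeff g j = (\<Sum>k=1..m. complex_of_real (\<beta> k) * Pser (\<zeta> k) $ j)" for j
    using fps_nth_fps_expansion[OF gexp, of j] by (simp add: taylor_coeff_def fps_sum_nth)
  have key: "(\<Sum>j=0..n. a (n - j) * taylor_coeff g j) = (\<Sum>k=1..m. complex_of_real (\<beta> k) * H (\<zeta> k))"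
  proof -
    have "(\<Sum>j=0..n. a (n - j) * taylor_coeff g j)
       = (\<Sum>k=1..m. complex_of_real (\<beta> k) * (\<Sum>j=0..n. a (n - j) * Pser (\<zeta> k) $ j))"
      unfolding tg by (simp add: sum_distrib_left sum_distrib_right mult_ac) (rule sum.swap)
    also have "\<dots> = (\<Sum>k=1..m. complex_of_real (\<beta> k) * H (\<zeta> k))"
    proof (intro sum.cong refl arg_cong2[where f="(*)"])
      fix k
      have "(\<Sum>j=0..n. a (n - j) * Pser (\<zeta> k) $ j) = a n * Pser (\<zeta> k) $ 0 + (\<Sum>j=1..n. a (n - j) * Pser (\<zeta> k) $ j)"
        by (simp add: sum.atLeast_Suc_atMost)
      also have "\<dots> = H (\<zeta> k)"
        unfolding H_def a_def Pser_def by (auto intro!: sum.cong simp: mult_ac)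
      finally show "(\<Sum>j=0..n. a (n - j) * Pser (\<zeta> k) $ j) = H (\<zeta> k)" .
    qed
    finally show ?thesis .
  qed
  have contH: "continuous_on UNIV H" unfolding H_def by (intro continuous_intros)
  have closedS: "closed {z. Re (H z) \<ge> 0}"
    using closed_Collect_le[of "\<lambda>_. 0" "\<lambda>z. Re (H z)"] contH
    by (auto intro: continuous_intros)
  have "ball 0 1 \<subseteq> {z. Re (H z) \<ge> 0}" using assms(9) by (auto simp: less_imp_le)
  then have "closure (ball (0::complex) 1) \<subseteq> {z. Re (H z) \<ge> 0}"
    using closedS closure_minimal by blast
  then have cb: "cball 0 1 \<subseteq> {z. Re (H z) \<ge> 0}" by simp
  have nn: "Re (H (\<zeta> k)) \<ge> 0" for k
  proof -
    have "norm (\<zeta> k) = 1" unfolding \<zeta>_def by (simp add: norm_exp_i_times)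
    then have "\<zeta> k \<in> cball 0 1" by simp
    then show ?thesis using cb by blast
  qed
  have "Re (\<Sum>j=0..n. taylor_coeff f (n - j) * taylor_coeff g j) = (\<Sum>k=1..m. \<beta> k * Re (H (\<zeta> k)))"
    using key unfolding a_def by (simp add: Re_sum)
  also have "\<dots> = 0 \<longleftrightarrow> (\<forall>k\<in>{1..m}. \<beta> k * Re (H (\<zeta> k)) = 0)"
    using assms(2) nn by (intro sum_nonneg_eq_0_iff) (auto simp: less_imp_le)
  also have "\<dots> \<longleftrightarrow> (\<forall>k\<in>{1..m}. Re (H (\<zeta> k)) = 0)"
    using assms(2) by (metis less_irrefl mult_eq_0_iff)
  finally show ?thesis unfolding \<zeta>_def .
qed

end
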